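(* For every positive integer $q$, the simplicial complex $\mathbb{M}_q^2$, with vertex $\ell_{i,j}$ labeled by $\tau_i\tau_j$, supports the minimal free resolution of $\mathcal{T}_q^{\,2}$, where $\mathcal{T}_q$ is the permutation ideal.
   Context: $S_q$ is the symmetric group on $[q]$; for $\sigma=i_1\cdots i_q$ in one-line notation, $\sigma(j)=i_j$. $K$ is a field, $S_{\mathcal{T}}=K[x_\sigma:\sigma\in S_q]$, $\tau_i=\prod_{\sigma\in S_q}x_\sigma^{\sigma(i)}$, $\mathcal{T}_q=(\tau_1,\ldots,\tau_q)$. $\mathbb{M}_q^2$: vertex set $\{\ell_{i,j}:1\le i\le j\le q\}$, $\mathcal{M}=\{\ell_{i,j}:i<j\}$, facets $\mathcal{M}_k=\mathcal{M}\cup\{\ell_{k,k}\}$, $k\in[q]$. A labeled simplicial complex (faces labeled by lcm of vertex labels) supports a free resolution of the ideal generated by its vertex labels if the Bayer–Peeva–Sturmfels homogenization of its augmented simplicial chain complex (free basis element for each face $\tau$ in multidegree $m_\tau$, differential $\tau\mapsto\sum\pm(m_\tau/m_{\tau\setminus v})(\tau\setminus v)$) is exact, i.e. is a free resolution of that ideal. *)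

theory Defs
  imports "HOL-Library.Poly_Mapping" "HOL-Library.Product_Lexorder" "HOL-Combinatorics.Permutations"
begin

type_synonym ('x, 'k) mpoly = "('x \<Rightarrow>\<^sub>0 nat) \<Rightarrow>\<^sub>0 'k"

definition mono :: "('x \<Rightarrow>\<^sub>0 nat) \<Rightarrow> ('x, 'k::zero_neq_one) mpoly" where
  "mono a = Poly_Mapping.single a 1"

(* exponent vector of the lcm of the labels of the vertices of a face (empty face: 1) *)
definition face_label :: "('v \<Rightarrow> ('x \<Rightarrow>\<^sub>0 nat)) \<Rightarrow> 'v set \<Rightarrow> ('x \<Rightarrow>\<^sub>0 nat)" where
  "face_label lab \<sigma> = Abs_poly_mapping (\<lambda>x. Max (insert 0 ((\<lambda>v. Poly_Mapping.lookup (lab v) x) ` \<sigma>)))"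

(* Bayer-Peeva-Sturmfels homogenized differential of the augmented chain complex.
   A chain is a function from faces to polynomials (the coefficient vector w.r.t. the
   free basis indexed by the faces).  The basis element of \<tau> is sent to
   \<Sum>_{v\<in>\<tau>} (-1)^(position of v in \<tau>) (m_\<tau>/m_{\<tau>-v}) (\<tau>-v). *)
definition bps_diff ::
  "'v::linorder set set \<Rightarrow> ('v \<Rightarrow> ('x \<Rightarrow>\<^sub>0 nat)) \<Rightarrow> ('v set \<Rightarrow> ('x, 'k::comm_ring_1) mpoly)
     \<Rightarrow> 'v set \<Rightarrow> ('x, 'k) mpoly" where
  "bps_diff \<Delta> lab f \<sigma> =
     (\<Sum>\<tau> \<in> {\<tau> \<in> \<Delta>. \<sigma> \<subseteq> \<tau> \<and> card \<tau> = Suc (card \<sigma>)}.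
        (-1) ^ card {w \<in> \<sigma>. w < the_elem (\<tau> - \<sigma>)}
        * mono (face_label lab \<tau> - face_label lab \<sigma>) * f \<tau>)"

(* chains in homological position k-1, i.e. supported on faces with k vertices *)
definition chain_on :: "'v set set \<Rightarrow> nat \<Rightarrow> ('v set \<Rightarrow> 'a::zero) \<Rightarrow> bool" where
  "chain_on \<Delta> k f \<longleftrightarrow> (\<forall>\<sigma>. f \<sigma> \<noteq> 0 \<longrightarrow> \<sigma> \<in> \<Delta> \<and> card \<sigma> = k)"

definition ideal_gen :: "'a::comm_ring_1 set \<Rightarrow> 'a set" where
  "ideal_gen G = {(\<Sum>g\<in>F. a g * g) | F a. finite F \<and> F \<subseteq> G}"

definition ideal_prod :: "'a::comm_ring_1 set \<Rightarrow> 'a set \<Rightarrow> 'a set" where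
  "ideal_prod I J = ideal_gen {a * b | a b. a \<in> I \<and> b \<in> J}"

(* The homogenized augmented chain complex is a free resolution of I:
   exact at every F_i (i \<ge> 0, faces with i+1 vertices), where F_0 maps to S via the
   empty face, and the image of F_0 \<rightarrow> S is I. *)
definition supports_free_resolution ::
  "'v::linorder set set \<Rightarrow> ('v \<Rightarrow> ('x \<Rightarrow>\<^sub>0 nat)) \<Rightarrow> ('x, 'k::comm_ring_1) mpoly set \<Rightarrow> bool" where
  "supports_free_resolution \<Delta> lab I \<longleftrightarrow>
     (\<forall>k \<ge> 1. \<forall>f::'v set \<Rightarrow> ('x, 'k) mpoly. chain_on \<Delta> k f \<and> bps_diff \<Delta> lab f = (\<lambda>_. 0) \<longrightarrow>
         (\<exists>g. chain_on \<Delta> (Suc k) g \<and> bps_diff \<Delta> lab g = f))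
     \<and> {bps_diff \<Delta> lab f {} | f::'v set \<Rightarrow> ('x, 'k) mpoly. chain_on \<Delta> 1 f} = I"

(* minimality: d(F_i) \<subseteq> \<mm> F_{i-1} for all i \<ge> 1, \<mm> = ideal of the variables
   (polynomials with zero constant term) *)
definition supports_minimal_free_resolution ::
  "'v::linorder set set \<Rightarrow> ('v \<Rightarrow> ('x \<Rightarrow>\<^sub>0 nat)) \<Rightarrow> ('x, 'k::comm_ring_1) mpoly set \<Rightarrow> bool" where
  "supports_minimal_free_resolution \<Delta> lab I \<longleftrightarrow>
     supports_free_resolution \<Delta> lab I \<and>
     (\<forall>k \<ge> 1. \<forall>f::'v set \<Rightarrow> ('x, 'k) mpoly. chain_on \<Delta> (Suc k) f \<longrightarrow>
         (\<forall>\<sigma>. Poly_Mapping.lookup (bps_diff \<Delta> lab f \<sigma>) 0 = 0))"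

(* Permutation ideal: variables x_\<sigma> indexed by permutations \<sigma> of {1..q}
   (functions nat \<Rightarrow> nat with \<sigma> permutes {1..q}); \<tau>_i = \<Prod>_\<sigma> x_\<sigma>^\<sigma>(i). *)
definition tau_exp :: "nat \<Rightarrow> nat \<Rightarrow> ((nat \<Rightarrow> nat) \<Rightarrow>\<^sub>0 nat)" where
  "tau_exp q i = Abs_poly_mapping (\<lambda>\<sigma>. if \<sigma> permutes {1..q} then \<sigma> i else 0)"

definition tau :: "nat \<Rightarrow> nat \<Rightarrow> (nat \<Rightarrow> nat, 'k::field) mpoly" where
  "tau q i = mono (tau_exp q i)"

definition perm_ideal :: "nat \<Rightarrow> (nat \<Rightarrow> nat, 'k::field) mpoly set" where
  "perm_ideal q = ideal_gen (tau q ` {1..q})"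

(* the complex M_q^2: vertex (i,j) stands for \<ell>_{i,j}, 1 \<le> i \<le> j \<le> q *)
definition M_set :: "nat \<Rightarrow> (nat \<times> nat) set" where
  "M_set q = {(i, j). 1 \<le> i \<and> i < j \<and> j \<le> q}"

definition M2_complex :: "nat \<Rightarrow> (nat \<times> nat) set set" where
  "M2_complex q = {\<sigma>. \<exists>k \<in> {1..q}. \<sigma> \<subseteq> insert (k, k) (M_set q)}"

definition M2_label :: "nat \<Rightarrow> nat \<times> nat \<Rightarrow> ((nat \<Rightarrow> nat) \<Rightarrow>\<^sub>0 nat)" where
  "M2_label q v = tau_exp q (fst v) + tau_exp q (snd v)"

end

theory Submission
  imports Defs
begin


definition le_pm :: "('x \<Rightarrow>\<^sub>0 nat) \<Rightarrow> ('x \<Rightarrow>\<^sub>0 nat) \<Rightarrow> bool" where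
  "le_pm a b \<longleftrightarrow> (\<forall>x. Poly_Mapping.lookup a x \<le> Poly_Mapping.lookup b x)"

lemma eq_add_iff_pm:
  fixes d e q :: "'x \<Rightarrow>\<^sub>0 nat"
  shows "(e = d + q) \<longleftrightarrow> (le_pm d e \<and> q = e - d)"
  unfolding le_pm_def poly_mapping_eq_iff
  by (auto simp: fun_eq_iff lookup_add lookup_minus)

lemma lookup_mono_mult:
  fixes p :: "('x, 'k::comm_ring_1) mpoly"
  shows "Poly_Mapping.lookup (mono d * p) e = (if le_pm d e then Poly_Mapping.lookup p (e - d) else 0)"
proof -
  have "Poly_Mapping.lookup (mono d * p) e
      = (\<Sum>l. Poly_Mapping.lookup (mono d) l * (\<Sum>q. Poly_Mapping.lookup p q when e = l + q))"
    by (rule lookup_mult)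
  also have "\<dots> = (\<Sum>q. Poly_Mapping.lookup p q when e = d + q)"
  proof -
    have "(\<Sum>l. Poly_Mapping.lookup (mono d) l * (\<Sum>q. Poly_Mapping.lookup p q when e = l + q))
        = (\<Sum>l. (\<Sum>q. Poly_Mapping.lookup p q when e = l + q) when l = d)"
      by (rule Sum_any.cong) (simp add: mono_def lookup_single when_def)
    also have "\<dots> = (\<Sum>q. Poly_Mapping.lookup p q when e = d + q)"
      by simp
    finally show ?thesis .
  qed
  also have "\<dots> = (if le_pm d e then Poly_Mapping.lookup p (e - d) else 0)"
    by (simp add: eq_add_iff_pm when_def)
  finally show ?thesis .
qed

lemma lookup_neg1_pow:
  fixes p :: "('x, 'k::comm_ring_1) mpoly"
  shows "Poly_Mapping.lookup ((-1)^n * p) e = (-1)^n * Poly_Mapping.lookup p e"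
  by (induction n) (simp_all)

lemma lookup_face_label:
  assumes "finite \<tau>"
  shows "Poly_Mapping.lookup (face_label lab \<tau>) x = Max (insert 0 ((\<lambda>v. Poly_Mapping.lookup (lab v) x) ` \<tau>))"
proof -
  have "{x. Max (insert 0 ((\<lambda>v. Poly_Mapping.lookup (lab v) x) ` \<tau>)) \<noteq> 0} \<subseteq> (\<Union>v\<in>\<tau>. Poly_Mapping.keys (lab v))"
  proof
    fix x assume "x \<in> {x. Max (insert 0 ((\<lambda>v. Poly_Mapping.lookup (lab v) x) ` \<tau>)) \<noteq> 0}"
    then have "Max (insert 0 ((\<lambda>v. Poly_Mapping.lookup (lab v) x) ` \<tau>)) \<noteq> 0" by simp
    moreover have "Max (insert 0 ((\<lambda>v. Poly_Mapping.lookup (lab v) x) ` \<tau>)) \<in> insert 0 ((\<lambda>v. Poly_Mapping.lookup (lab v) x) ` \<tau>)"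
      using assms by (intro Max_in) auto
    ultimately show "x \<in> (\<Union>v\<in>\<tau>. Poly_Mapping.keys (lab v))"
      by (auto simp: in_keys_iff)
  qed
  moreover have "finite (\<Union>v\<in>\<tau>. Poly_Mapping.keys (lab v))" using assms by auto
  ultimately have "finite {x. Max (insert 0 ((\<lambda>v. Poly_Mapping.lookup (lab v) x) ` \<tau>)) \<noteq> 0}"
    by (rule finite_subset)
  then show ?thesis unfolding face_label_def by simp
qed

lemma face_label_mono:
  assumes "\<sigma> \<subseteq> \<tau>" "finite \<tau>"
  shows "le_pm (face_label lab \<sigma>) (face_label lab \<tau>)"
  unfolding le_pm_def
proof
  fix x
  have "finite \<sigma>" using assms finite_subset by blast
  then show "Poly_Mapping.lookup (face_label lab \<sigma>) x \<le> Poly_Mapping.lookup (face_label lab \<tau>) x"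
    using assms by (auto simp: lookup_face_label intro!: Max_ge)
qed

lemma lab_le_face_label:
  assumes "v \<in> \<tau>" "finite \<tau>"
  shows "le_pm (lab v) (face_label lab \<tau>)"
  unfolding le_pm_def using assms by (auto simp: lookup_face_label)

lemma face_label_le:
  assumes "finite \<tau>" "\<And>v. v \<in> \<tau> \<Longrightarrow> le_pm (lab v) b"
  shows "le_pm (face_label lab \<tau>) b"
  unfolding le_pm_def using assms by (auto simp: lookup_face_label le_pm_def)

lemma face_label_empty: "face_label lab {} = 0"
  by (rule poly_mapping_eqI) (simp add: lookup_face_label)

lemma face_label_single: "face_label lab {v} = lab v"
  by (rule poly_mapping_eqI) (simp add: lookup_face_label)

lemma le_pm_trans: "le_pm a b \<Longrightarrow> le_pm b c \<Longrightarrow> le_pm a c"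
  unfolding le_pm_def using order_trans by blast



definition coef :: "('v \<Rightarrow> ('x \<Rightarrow>\<^sub>0 nat)) \<Rightarrow> ('v set \<Rightarrow> ('x, 'k::comm_ring_1) mpoly) \<Rightarrow> 'v set \<Rightarrow> ('x \<Rightarrow>\<^sub>0 nat) \<Rightarrow> 'k" where
  "coef lab f \<tau> b = (if le_pm (face_label lab \<tau>) b then Poly_Mapping.lookup (f \<tau>) (b - face_label lab \<tau>) else 0)"

definition kdiff :: "'v::linorder set set \<Rightarrow> ('v set \<Rightarrow> 'k::comm_ring_1) \<Rightarrow> 'v set \<Rightarrow> 'k" where
  "kdiff \<Delta> \<psi> \<sigma> = (\<Sum>\<tau> \<in> {\<tau> \<in> \<Delta>. \<sigma> \<subseteq> \<tau> \<and> card \<tau> = Suc (card \<sigma>)}.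
        (-1) ^ card {w \<in> \<sigma>. w < the_elem (\<tau> - \<sigma>)} * \<psi> \<tau>)"

lemma coef_nonzero_le: "coef lab f \<tau> b \<noteq> 0 \<Longrightarrow> le_pm (face_label lab \<tau>) b"
  unfolding coef_def by (auto split: if_splits)

lemma le_pm_diff_add:
  fixes a b :: "'x \<Rightarrow>\<^sub>0 nat"
  shows "le_pm a b \<Longrightarrow> b - a + a = b"
  unfolding le_pm_def by (intro poly_mapping_eqI) (simp add: lookup_add lookup_minus)

lemma add_diff_pm:
  fixes a b :: "'x \<Rightarrow>\<^sub>0 nat"
  shows "b + a - a = b"
  by (intro poly_mapping_eqI) (simp add: lookup_add lookup_minus)

lemma le_pm_add: "le_pm a (b + a)"
  unfolding le_pm_def by (simp add: lookup_add)

lemma nat_sub_le_iff: "(a::nat) \<le> t \<Longrightarrow> a \<le> bb \<Longrightarrow> (t - a \<le> bb - a) = (t \<le> bb)"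
  by arith

lemma coef_diff:
  fixes h :: "'v::linorder set \<Rightarrow> ('x, 'k::comm_ring_1) mpoly"
  assumes fin: "\<And>\<tau>. \<tau> \<in> \<Delta> \<Longrightarrow> finite \<tau>"
  shows "coef lab (bps_diff \<Delta> lab h) \<sigma> b = kdiff \<Delta> (\<lambda>\<tau>. coef lab h \<tau> b) \<sigma>"
proof (cases "le_pm (face_label lab \<sigma>) b")
  case True
  let ?S = "{\<tau> \<in> \<Delta>. \<sigma> \<subseteq> \<tau> \<and> card \<tau> = Suc (card \<sigma>)}"
  have "coef lab (bps_diff \<Delta> lab h) \<sigma> b =
     (\<Sum>\<tau>\<in>?S. (-1) ^ card {w \<in> \<sigma>. w < the_elem (\<tau> - \<sigma>)} *
        Poly_Mapping.lookup (mono (face_label lab \<tau> - face_label lab \<sigma>) * h \<tau>) (b - face_label lab \<sigma>))"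
    using True unfolding coef_def bps_diff_def
    by (simp add: lookup_sum mult.assoc lookup_neg1_pow)
  also have "\<dots> = kdiff \<Delta> (\<lambda>\<tau>. coef lab h \<tau> b) \<sigma>"
    unfolding kdiff_def
  proof (rule sum.cong[OF refl])
    fix \<tau> assume "\<tau> \<in> ?S"
    then have st: "le_pm (face_label lab \<sigma>) (face_label lab \<tau>)"
      using fin by (auto intro: face_label_mono)
    have "Poly_Mapping.lookup (mono (face_label lab \<tau> - face_label lab \<sigma>) * h \<tau>) (b - face_label lab \<sigma>)
          = coef lab h \<tau> b"
      unfolding lookup_mono_mult coef_def
    proof -
      have e1: "le_pm (face_label lab \<tau> - face_label lab \<sigma>) (b - face_label lab \<sigma>) = le_pm (face_label lab \<tau>) b"
        using st True unfolding le_pm_def by (auto simp: lookup_minus nat_sub_le_iff)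
      have e2: "b - face_label lab \<sigma> - (face_label lab \<tau> - face_label lab \<sigma>) = b - face_label lab \<tau>"
        using st True unfolding le_pm_def by (intro poly_mapping_eqI) (auto simp: lookup_minus)
      show "(if le_pm (face_label lab \<tau> - face_label lab \<sigma>) (b - face_label lab \<sigma>)
          then poly_mapping.lookup (h \<tau>) (b - face_label lab \<sigma> - (face_label lab \<tau> - face_label lab \<sigma>)) else 0) =
    (if le_pm (face_label lab \<tau>) b then poly_mapping.lookup (h \<tau>) (b - face_label lab \<tau>) else 0)"
        using e1 e2 by simp
    qed
    then show "(-1) ^ card {w \<in> \<sigma>. w < the_elem (\<tau> - \<sigma>)} *
        Poly_Mapping.lookup (mono (face_label lab \<tau> - face_label lab \<sigma>) * h \<tau>) (b - face_label lab \<sigma>)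
       = (-1) ^ card {w \<in> \<sigma>. w < the_elem (\<tau> - \<sigma>)} * coef lab h \<tau> b" by simp
  qed
  finally show ?thesis .
next
  case False
  have "coef lab h \<tau> b = 0" if "\<tau> \<in> \<Delta>" "\<sigma> \<subseteq> \<tau>" for \<tau>
  proof (rule ccontr)
    assume "coef lab h \<tau> b \<noteq> 0"
    then have "le_pm (face_label lab \<tau>) b" by (rule coef_nonzero_le)
    moreover have "le_pm (face_label lab \<sigma>) (face_label lab \<tau>)"
      using that fin by (auto intro: face_label_mono)
    ultimately show False using False le_pm_trans by blast
  qed
  then have "kdiff \<Delta> (\<lambda>\<tau>. coef lab h \<tau> b) \<sigma> = 0"
    unfolding kdiff_def by (intro sum.neutral) auto
  then show ?thesis using False by (simp add: coef_def)
qed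



definition hom :: "'v::linorder \<Rightarrow> ('v set \<Rightarrow> 'k::comm_ring_1) \<Rightarrow> 'v set \<Rightarrow> 'k" where
  "hom a \<psi> G = (if a \<in> G then (-1) ^ card {w \<in> G - {a}. w < a} * \<psi> (G - {a}) else 0)"

lemma superset_card_Suc:
  assumes "finite G"
  shows "{\<tau> \<in> \<Delta>. G \<subseteq> \<tau> \<and> card \<tau> = Suc (card G)} = (\<lambda>v. insert v G) ` {v. v \<notin> G \<and> insert v G \<in> \<Delta>}"
proof (intro equalityI subsetI)
  fix \<tau> assume "\<tau> \<in> {\<tau> \<in> \<Delta>. G \<subseteq> \<tau> \<and> card \<tau> = Suc (card G)}"
  then have t: "\<tau> \<in> \<Delta>" "G \<subseteq> \<tau>" "card \<tau> = Suc (card G)" by auto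
  then have "finite \<tau>" by (metis card.infinite nat.distinct(1))
  then have "card (\<tau> - G) = 1" using t assms by (simp add: card_Diff_subset)
  then obtain v where v: "\<tau> - G = {v}" by (rule card_1_singletonE)
  then have "\<tau> = insert v G" "v \<notin> G" using t by auto
  then show "\<tau> \<in> (\<lambda>v. insert v G) ` {v. v \<notin> G \<and> insert v G \<in> \<Delta>}" using t by auto
next
  fix \<tau> assume "\<tau> \<in> (\<lambda>v. insert v G) ` {v. v \<notin> G \<and> insert v G \<in> \<Delta>}"
  then show "\<tau> \<in> {\<tau> \<in> \<Delta>. G \<subseteq> \<tau> \<and> card \<tau> = Suc (card G)}" using assms by auto
qed

lemma kdiff_vertex:
  assumes "finite G"
  shows "kdiff \<Delta> \<psi> G = (\<Sum>v \<in> {v. v \<notin> G \<and> insert v G \<in> \<Delta>}. (-1) ^ card {w \<in> G. w < v} * \<psi> (insert v G))"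
proof -
  have inj: "inj_on (\<lambda>v. insert v G) {v. v \<notin> G \<and> insert v G \<in> \<Delta>}"
    by (auto simp: inj_on_def)
  have th: "v \<notin> G \<Longrightarrow> the_elem (insert v G - G) = v" for v
    by (subgoal_tac "insert v G - G = {v}") auto
  show ?thesis unfolding kdiff_def superset_card_Suc[OF assms]
    by (simp add: sum.reindex[OF inj] th)
qed

lemma card_less_insert:
  assumes "finite H" "x \<notin> H"
  shows "card {w \<in> insert x H. w < y} = card {w \<in> H. w < y} + (if x < y then 1 else 0)"
proof -
  have "{w \<in> insert x H. w < y} = (if x < y then insert x {w \<in> H. w < y} else {w \<in> H. w < y})" by auto
  then show ?thesis using assms by simp
qed

lemma sign_swap:
  fixes a v :: "'v::linorder"
  assumes "finite H" "a \<notin> H" "v \<notin> H" "v \<noteq> a"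
  shows "((-1) ^ card {w \<in> insert a H. w < v} * (-1) ^ card {w \<in> insert v H. w < a} :: 'k::comm_ring_1)
     = - ((-1) ^ card {w \<in> H. w < a} * (-1) ^ card {w \<in> H. w < v})"
proof -
  have "a < v \<or> v < a" using assms(4) by auto
  then show ?thesis
    unfolding card_less_insert[OF assms(1,2)] card_less_insert[OF assms(1,3)]
    by (auto simp: power_add)
qed

lemma homotopy:
  fixes \<psi> :: "'v::linorder set \<Rightarrow> 'k::comm_ring_1"
  assumes finD: "finite \<Delta>"
   and fin: "\<And>\<tau>. \<tau> \<in> \<Delta> \<Longrightarrow> finite \<tau>"
   and down: "\<And>\<tau> \<rho>. \<tau> \<in> \<Delta> \<Longrightarrow> \<rho> \<subseteq> \<tau> \<Longrightarrow> \<rho> \<in> \<Delta>"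
   and ins: "\<And>\<tau>. \<tau> \<in> \<Delta> \<Longrightarrow> insert a \<tau> \<in> \<Delta>"
   and supp: "\<And>\<tau>. \<psi> \<tau> \<noteq> 0 \<Longrightarrow> \<tau> \<in> \<Delta>"
   and cyc: "\<And>\<sigma>. kdiff \<Delta> \<psi> \<sigma> = 0"
  shows "kdiff \<Delta> (hom a \<psi>) G = \<psi> G"
proof (cases "G \<in> \<Delta>")
  case False
  then have e: "{\<tau> \<in> \<Delta>. G \<subseteq> \<tau> \<and> card \<tau> = Suc (card G)} = {}" using down by blast
  have "kdiff \<Delta> (hom a \<psi>) G = 0" unfolding kdiff_def e by simp
  then show ?thesis using False supp by fastforce
next
  case True
  have finG: "finite G" using True fin by blast
  have finU: "finite {v. v \<notin> X \<and> insert v X \<in> \<Delta>}" for X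
  proof -
    have "{v. v \<notin> X \<and> insert v X \<in> \<Delta>} \<subseteq> \<Union>\<Delta>" by auto
    moreover have "finite (\<Union>\<Delta>)" using finD fin by auto
    ultimately show ?thesis by (rule finite_subset)
  qed
  define U where "U = {v. v \<notin> G \<and> insert v G \<in> \<Delta>}"
  show ?thesis
  proof (cases "a \<in> G")
    case False
    have aU: "a \<in> U" using False ins True unfolding U_def by auto
    have "kdiff \<Delta> (hom a \<psi>) G = (\<Sum>v\<in>U. (-1) ^ card {w \<in> G. w < v} * hom a \<psi> (insert v G))"
      unfolding U_def by (rule kdiff_vertex[OF finG])
    also have "\<dots> = (-1) ^ card {w \<in> G. w < a} * hom a \<psi> (insert a G)"
    proof (rule sum.remove[OF _ aU, THEN trans])
      show "finite U" unfolding U_def by (rule finU)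
      have "(\<Sum>v\<in>U - {a}. (-1) ^ card {w \<in> G. w < v} * hom a \<psi> (insert v G)) = 0"
        by (rule sum.neutral) (use False in \<open>auto simp: hom_def\<close>)
      then show "(-1) ^ card {w \<in> G. w < a} * hom a \<psi> (insert a G) +
          (\<Sum>v\<in>U - {a}. (-1) ^ card {w \<in> G. w < v} * hom a \<psi> (insert v G)) =
          (-1) ^ card {w \<in> G. w < a} * hom a \<psi> (insert a G)" by simp
    qed
    also have "\<dots> = \<psi> G"
    proof -
      have "insert a G - {a} = G" using False by auto
      then show ?thesis unfolding hom_def by (simp add: mult.assoc[symmetric] power_add[symmetric])
    qed
    finally show ?thesis .
  next
    case aG: True
    define H where "H = G - {a}"
    have GH: "G = insert a H" "a \<notin> H" using aG unfolding H_def by auto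
    have HD: "H \<in> \<Delta>" using True down unfolding H_def by blast
    have finH: "finite H" using HD fin by blast
    have U': "{u. u \<notin> H \<and> insert u H \<in> \<Delta>} = insert a U"
    proof (intro equalityI subsetI)
      fix u assume u: "u \<in> {u. u \<notin> H \<and> insert u H \<in> \<Delta>}"
      show "u \<in> insert a U"
      proof (cases "u = a")
        case False
        then have "u \<notin> G" using u GH by auto
        moreover have "insert u G \<in> \<Delta>" using ins[of "insert u H"] u GH by (simp add: insert_commute)
        ultimately show ?thesis unfolding U_def by auto
      qed simp
    next
      fix u assume "u \<in> insert a U"
      then show "u \<in> {u. u \<notin> H \<and> insert u H \<in> \<Delta>}"
        unfolding U_def using GH True down[of "insert u G" "insert u H"] by auto
    qed
    have aU: "a \<notin> U" unfolding U_def using aG by auto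
    have finU2: "finite U" unfolding U_def by (rule finU)
    define S where "S = (\<Sum>v\<in>U. (-1) ^ card {w \<in> H. w < v} * \<psi> (insert v H))"
    have "0 = kdiff \<Delta> \<psi> H" using cyc by simp
    also have "\<dots> = (\<Sum>v\<in>insert a U. (-1) ^ card {w \<in> H. w < v} * \<psi> (insert v H))"
      unfolding kdiff_vertex[OF finH] U' ..
    also have "\<dots> = (-1) ^ card {w \<in> H. w < a} * \<psi> G + S"
      unfolding S_def using finU2 aU GH by simp
    finally have eqS: "S = - ((-1) ^ card {w \<in> H. w < a} * \<psi> G)"
      by (simp add: eq_neg_iff_add_eq_0 add.commute)
    have "kdiff \<Delta> (hom a \<psi>) G = (\<Sum>v\<in>U. (-1) ^ card {w \<in> G. w < v} * hom a \<psi> (insert v G))"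
      unfolding U_def by (rule kdiff_vertex[OF finG])
    also have "\<dots> = (\<Sum>v\<in>U. - ((-1) ^ card {w \<in> H. w < a}) * ((-1) ^ card {w \<in> H. w < v} * \<psi> (insert v H)))"
    proof (rule sum.cong[OF refl])
      fix v assume vU: "v \<in> U"
      then have vs: "v \<notin> H" "v \<noteq> a" using GH unfolding U_def by auto
      have e: "insert v G - {a} = insert v H" using vs GH by auto
      have "(-1) ^ card {w \<in> G. w < v} * hom a \<psi> (insert v G)
         = ((-1) ^ card {w \<in> insert a H. w < v} * (-1) ^ card {w \<in> insert v H. w < a}) * \<psi> (insert v H)"
        unfolding hom_def e using GH by (simp add: mult.assoc)
      also have "\<dots> = - ((-1) ^ card {w \<in> H. w < a} * (-1) ^ card {w \<in> H. w < v}) * \<psi> (insert v H)"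
        unfolding sign_swap[OF finH GH(2) vs] by simp
      finally show "(-1) ^ card {w \<in> G. w < v} * hom a \<psi> (insert v G)
         = - ((-1) ^ card {w \<in> H. w < a}) * ((-1) ^ card {w \<in> H. w < v} * \<psi> (insert v H))"
        by (simp add: mult.assoc)
    qed
    also have "\<dots> = - ((-1) ^ card {w \<in> H. w < a}) * S"
      unfolding S_def by (simp add: sum_distrib_left)
    also have "\<dots> = \<psi> G" unfolding eqS
      by (simp add: mult.assoc[symmetric] power_add[symmetric])
    finally show ?thesis .
  qed
qed



lemma M2_sub: "\<tau> \<in> M2_complex q \<Longrightarrow> \<tau> \<subseteq> {1..q} \<times> {1..q}"
  unfolding M2_complex_def M_set_def by auto

lemma M2_finite: "finite (M2_complex q)"
proof -
  have "M2_complex q \<subseteq> Pow ({1..q} \<times> {1..q})" using M2_sub by blast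
  then show ?thesis by (rule finite_subset) simp
qed

lemma M2_fin_elem: "\<tau> \<in> M2_complex q \<Longrightarrow> finite \<tau>"
  using M2_sub by (meson finite_SigmaI finite_atLeastAtMost finite_subset)

lemma M2_down: "\<tau> \<in> M2_complex q \<Longrightarrow> \<rho> \<subseteq> \<tau> \<Longrightarrow> \<rho> \<in> M2_complex q"
  unfolding M2_complex_def by blast

lemma M2_ins: "a \<in> M_set q \<Longrightarrow> \<tau> \<in> M2_complex q \<Longrightarrow> insert a \<tau> \<in> M2_complex q"
  unfolding M2_complex_def by blast

lemma lookup_tau_exp: "Poly_Mapping.lookup (tau_exp q i) \<pi> = (if \<pi> permutes {1..q} then \<pi> i else 0)"
proof -
  have "{\<sigma>. (if \<sigma> permutes {1..q} then \<sigma> i else 0) \<noteq> 0} \<subseteq> {\<sigma>. \<sigma> permutes {1..q}}" by auto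
  moreover have "finite {\<sigma>. \<sigma> permutes {1..q}}" by (rule finite_permutations) simp
  ultimately have "finite {\<sigma>. (if \<sigma> permutes {1..q} then \<sigma> i else 0) \<noteq> 0}" by (rule finite_subset)
  then show ?thesis unfolding tau_exp_def by simp
qed

lemma lookup_M2_label: "Poly_Mapping.lookup (M2_label q (i, j)) \<pi> =
   Poly_Mapping.lookup (tau_exp q i) \<pi> + Poly_Mapping.lookup (tau_exp q j) \<pi>"
  unfolding M2_label_def by (simp add: lookup_add)

lemma diag_le:
  assumes "le_pm (M2_label q (c, c)) b" "le_pm (M2_label q (d, d)) b"
  shows "le_pm (M2_label q (min c d, max c d)) b"
  unfolding le_pm_def lookup_M2_label
proof
  fix x
  let ?t = "\<lambda>i. Poly_Mapping.lookup (tau_exp q i) x"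
  have "?t c + ?t c \<le> Poly_Mapping.lookup b x" "?t d + ?t d \<le> Poly_Mapping.lookup b x"
    using assms unfolding le_pm_def lookup_M2_label by auto
  moreover have "?t (min c d) + ?t (max c d) = ?t c + ?t d" by (cases "c \<le> d") (auto simp: min_def max_def)
  ultimately show "?t (min c d) + ?t (max c d) \<le> Poly_Mapping.lookup b x" by linarith
qed



lemma coef_zero_chain: "coef lab (\<lambda>_. 0) \<sigma> b = 0"
  unfolding coef_def by simp

lemma coef_nonzero_f: "coef lab f \<sigma> b \<noteq> 0 \<Longrightarrow> f \<sigma> \<noteq> 0"
  unfolding coef_def by (auto split: if_splits)

lemma coef_add_eq: "Poly_Mapping.lookup (f \<sigma>) e = coef lab f \<sigma> (e + face_label lab \<sigma>)"
  unfolding coef_def by (simp add: le_pm_add add_diff_pm)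

lemma empty_case:
  fixes f :: "(nat \<times> nat) set \<Rightarrow> (nat \<Rightarrow> nat, 'k::field) mpoly"
  assumes k: "k \<ge> 1" and ch: "chain_on (M2_complex q) k f"
    and cyc: "\<And>\<sigma>. kdiff (M2_complex q) (\<lambda>\<tau>. coef (M2_label q) f \<tau> b) \<sigma> = 0"
    and A: "{v \<in> M_set q. le_pm (M2_label q v) b} = {}"
  shows "coef (M2_label q) f \<sigma> b = 0"
proof (rule ccontr)
  let ?D = "M2_complex q" and ?l = "M2_label q"
  let ?\<psi> = "\<lambda>\<tau>. coef ?l f \<tau> b"
  assume nz: "coef ?l f \<sigma> b \<noteq> 0"
  then have "f \<sigma> \<noteq> 0" by (rule coef_nonzero_f)
  then have sD: "\<sigma> \<in> ?D" "card \<sigma> = k" using ch unfolding chain_on_def by auto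
  have sle: "le_pm (face_label ?l \<sigma>) b" using nz by (rule coef_nonzero_le)
  have finS: "finite \<sigma>" using sD M2_fin_elem by blast
  obtain c where c: "c \<in> {1..q}" "\<sigma> \<subseteq> insert (c, c) (M_set q)" using sD unfolding M2_complex_def by auto
  have "v \<notin> M_set q" if "v \<in> \<sigma>" for v
  proof
    assume "v \<in> M_set q"
    moreover have "le_pm (?l v) b" using lab_le_face_label[OF that finS] sle le_pm_trans by blast
    ultimately show False using A by blast
  qed
  then have "\<sigma> \<subseteq> {(c, c)}" using c by auto
  moreover have "\<sigma> \<noteq> {}" using sD k by auto
  ultimately have sig: "\<sigma> = {(c, c)}" by auto
  let ?V = "{v. v \<notin> {} \<and> insert v {} \<in> ?D}"
  have finV: "finite ?V"
  proof -
    have "?V \<subseteq> \<Union>?D" by auto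
    moreover have "finite (\<Union>?D)" using M2_finite M2_fin_elem by blast
    ultimately show ?thesis by (rule finite_subset)
  qed
  have ccV: "(c, c) \<in> ?V" using sD sig by simp
  have "0 = kdiff ?D ?\<psi> {}" using cyc by simp
  also have "\<dots> = (\<Sum>v\<in>?V. (-1) ^ card {w \<in> {}. w < v} * ?\<psi> (insert v {}))"
    by (rule kdiff_vertex) simp
  also have "\<dots> = ?\<psi> {(c, c)}"
  proof (rule sum.remove[OF finV ccV, THEN trans])
    have "(\<Sum>v\<in>?V - {(c, c)}. (-1) ^ card {w \<in> {}. w < v} * ?\<psi> (insert v {})) = 0"
    proof (rule sum.neutral, rule ballI)
      fix v assume vV: "v \<in> ?V - {(c, c)}"
      show "(-1) ^ card {w \<in> {}. w < v} * ?\<psi> (insert v {}) = 0"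
      proof (rule ccontr)
        assume "(-1) ^ card {w \<in> {}. w < v} * ?\<psi> (insert v {}) \<noteq> 0"
        then have nz2: "?\<psi> {v} \<noteq> 0" by auto
        then have vle: "le_pm (?l v) b" using coef_nonzero_le face_label_single by metis
        then have vM: "v \<notin> M_set q" using A by blast
        have "{v} \<in> ?D" using vV by simp
        then obtain d where d: "d \<in> {1..q}" "{v} \<subseteq> insert (d, d) (M_set q)" unfolding M2_complex_def by blast
        then have vd: "v = (d, d)" using vM by auto
        then have "d \<noteq> c" using vV by auto
        have cle: "le_pm (?l (c, c)) b" using sle sig by (simp add: face_label_single)
        have "le_pm (?l (min c d, max c d)) b" using diag_le[OF cle] vle vd by simp
        moreover have "(min c d, max c d) \<in> M_set q" using c d \<open>d \<noteq> c\<close> unfolding M_set_def by auto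
        ultimately show False using A by blast
      qed
    qed
    then show "(-1) ^ card {w \<in> {}. w < (c, c)} * ?\<psi> (insert (c, c) {}) +
       (\<Sum>v\<in>?V - {(c, c)}. (-1) ^ card {w \<in> {}. w < v} * ?\<psi> (insert v {})) = ?\<psi> {(c, c)}" by simp
  qed
  finally show False using nz sig by simp
qed

lemma exact_M2:
  fixes f :: "(nat \<times> nat) set \<Rightarrow> (nat \<Rightarrow> nat, 'k::field) mpoly"
  assumes k: "k \<ge> 1" and ch: "chain_on (M2_complex q) k f"
    and df: "bps_diff (M2_complex q) (M2_label q) f = (\<lambda>_. 0)"
  shows "\<exists>g. chain_on (M2_complex q) (Suc k) g \<and> bps_diff (M2_complex q) (M2_label q) g = f"
proof -
  let ?D = "M2_complex q" and ?l = "M2_label q"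
  define \<psi> where "\<psi> b = (\<lambda>\<tau>. coef ?l f \<tau> b)" for b
  have cyc: "kdiff ?D (\<psi> b) \<sigma> = 0" for b \<sigma>
    using coef_diff[of ?D ?l f \<sigma> b] M2_fin_elem df unfolding \<psi>_def by (simp add: coef_zero_chain)
  have supp: "\<psi> b \<tau> \<noteq> 0 \<Longrightarrow> \<tau> \<in> ?D \<and> card \<tau> = k" for b \<tau>
    using ch coef_nonzero_f unfolding \<psi>_def chain_on_def by metis
  define A where "A b = {v \<in> M_set q. le_pm (?l v) b}" for b
  define ap where "ap b = (SOME v. v \<in> A b)" for b
  define Gf where "Gf \<tau> b = (if A b \<noteq> {} then hom (ap b) (\<psi> b) \<tau> else 0)" for \<tau> b
  define Bset where "Bset = (\<Union>\<tau>\<in>?D. (\<lambda>e. e + face_label ?l \<tau>) ` Poly_Mapping.keys (f \<tau>))"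
  have finB: "finite Bset" unfolding Bset_def using M2_finite by auto
  have inB: "\<psi> b \<sigma> \<noteq> 0 \<Longrightarrow> b \<in> Bset" for b \<sigma>
  proof -
    assume nz: "\<psi> b \<sigma> \<noteq> 0"
    then have "\<sigma> \<in> ?D" using supp by blast
    moreover have "le_pm (face_label ?l \<sigma>) b" using nz unfolding \<psi>_def by (rule coef_nonzero_le)
    moreover have "b - face_label ?l \<sigma> \<in> Poly_Mapping.keys (f \<sigma>)"
      using nz unfolding \<psi>_def coef_def by (auto simp: in_keys_iff split: if_splits)
    ultimately show "b \<in> Bset" unfolding Bset_def
      by (auto intro!: bexI[of _ \<sigma>] image_eqI[of b _ "b - face_label ?l \<sigma>"] simp: le_pm_diff_add)
  qed
  have Gnz: "A b \<noteq> {} \<and> ap b \<in> \<tau> \<and> \<psi> b (\<tau> - {ap b}) \<noteq> 0" if "Gf \<tau> b \<noteq> 0" for \<tau> b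
    using that unfolding Gf_def hom_def by (auto split: if_splits)
  have key: "le_pm (face_label ?l \<tau>) b \<and> \<tau> \<in> ?D \<and> card \<tau> = Suc k" if "Gf \<tau> b \<noteq> 0" for \<tau> b
  proof -
    have g: "A b \<noteq> {}" "ap b \<in> \<tau>" "\<psi> b (\<tau> - {ap b}) \<noteq> 0" using Gnz[OF that] by auto
    have apA: "ap b \<in> A b" unfolding ap_def using g(1) by (simp add: some_in_eq)
    then have apM: "ap b \<in> M_set q" and aple: "le_pm (?l (ap b)) b" unfolding A_def by auto
    define \<sigma> where "\<sigma> = \<tau> - {ap b}"
    have sD: "\<sigma> \<in> ?D" "card \<sigma> = k" using supp g(3) unfolding \<sigma>_def by auto
    have sle: "le_pm (face_label ?l \<sigma>) b" using g(3) unfolding \<psi>_def \<sigma>_def by (rule coef_nonzero_le)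
    have finS: "finite \<sigma>" using sD M2_fin_elem by blast
    have tau: "\<tau> = insert (ap b) \<sigma>" "ap b \<notin> \<sigma>" using g(2) unfolding \<sigma>_def by auto
    have "\<tau> \<in> ?D" using M2_ins[OF apM sD(1)] tau by simp
    moreover have "card \<tau> = Suc k" using tau finS sD by simp
    moreover have "le_pm (face_label ?l \<tau>) b"
    proof (rule face_label_le)
      show "finite \<tau>" using tau finS by simp
      fix v assume "v \<in> \<tau>"
      then show "le_pm (?l v) b" using tau aple lab_le_face_label[OF _ finS] sle le_pm_trans by blast
    qed
    ultimately show ?thesis by blast
  qed
  define g where "g \<tau> = Abs_poly_mapping (\<lambda>e. Gf \<tau> (e + face_label ?l \<tau>))" for \<tau>
  have lg: "Poly_Mapping.lookup (g \<tau>) = (\<lambda>e. Gf \<tau> (e + face_label ?l \<tau>))" for \<tau>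
  proof -
    have "{e. Gf \<tau> (e + face_label ?l \<tau>) \<noteq> 0} \<subseteq> (\<lambda>b. b - face_label ?l \<tau>) ` Bset"
    proof
      fix e assume "e \<in> {e. Gf \<tau> (e + face_label ?l \<tau>) \<noteq> 0}"
      then have "Gf \<tau> (e + face_label ?l \<tau>) \<noteq> 0" by simp
      then have "e + face_label ?l \<tau> \<in> Bset" using Gnz inB by blast
      then show "e \<in> (\<lambda>b. b - face_label ?l \<tau>) ` Bset" by (rule rev_image_eqI) (simp add: add_diff_pm)
    qed
    then have "finite {e. Gf \<tau> (e + face_label ?l \<tau>) \<noteq> 0}" using finB finite_subset by blast
    then show ?thesis unfolding g_def by simp
  qed
  have cg: "coef ?l g \<tau> b = Gf \<tau> b" for \<tau> b
    using key[of \<tau> b] unfolding coef_def lg by (auto simp: le_pm_diff_add)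
  have chg: "chain_on ?D (Suc k) g"
    unfolding chain_on_def
  proof (intro allI impI)
    fix \<tau> assume "g \<tau> \<noteq> 0"
    then obtain e where "Poly_Mapping.lookup (g \<tau>) e \<noteq> 0" using poly_mapping_eqI[of "g \<tau>" 0] by auto
    then have "Gf \<tau> (e + face_label ?l \<tau>) \<noteq> 0" unfolding lg by simp
    then show "\<tau> \<in> ?D \<and> card \<tau> = Suc k" using key by blast
  qed
  have "bps_diff ?D ?l g = f"
  proof (rule ext, rule poly_mapping_eqI)
    fix \<sigma> e
    define b where "b = e + face_label ?l \<sigma>"
    have "Poly_Mapping.lookup (bps_diff ?D ?l g \<sigma>) e = coef ?l (bps_diff ?D ?l g) \<sigma> b"
      unfolding b_def by (rule coef_add_eq)
    also have "\<dots> = kdiff ?D (\<lambda>\<tau>. coef ?l g \<tau> b) \<sigma>" by (rule coef_diff) (rule M2_fin_elem)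
    also have "\<dots> = kdiff ?D (\<lambda>\<tau>. Gf \<tau> b) \<sigma>" by (simp add: cg)
    also have "\<dots> = \<psi> b \<sigma>"
    proof (cases "A b = {}")
      case True
      then have "kdiff ?D (\<lambda>\<tau>. Gf \<tau> b) \<sigma> = 0" unfolding Gf_def kdiff_def by simp
      moreover have "\<psi> b \<sigma> = 0" unfolding \<psi>_def
        by (rule empty_case[OF k ch]) (use cyc True in \<open>auto simp: \<psi>_def A_def\<close>)
      ultimately show ?thesis by simp
    next
      case False
      then have apA: "ap b \<in> A b" unfolding ap_def by (simp add: some_in_eq)
      then have apM: "ap b \<in> M_set q" unfolding A_def by auto
      have "kdiff ?D (\<lambda>\<tau>. Gf \<tau> b) \<sigma> = kdiff ?D (hom (ap b) (\<psi> b)) \<sigma>"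
        unfolding Gf_def using False by simp
      also have "\<dots> = \<psi> b \<sigma>"
        by (rule homotopy[OF M2_finite M2_fin_elem M2_down M2_ins[OF apM]]) (use supp cyc in auto)
      finally show ?thesis .
    qed
    also have "\<dots> = Poly_Mapping.lookup (f \<sigma>) e"
      unfolding \<psi>_def b_def by (rule coef_add_eq[symmetric])
    finally show "Poly_Mapping.lookup (bps_diff ?D ?l g \<sigma>) e = Poly_Mapping.lookup (f \<sigma>) e" .
  qed
  then show ?thesis using chg by blast
qed



lemma lab_perm:
  assumes "\<pi> permutes {1..q}"
  shows "Poly_Mapping.lookup (M2_label q v) \<pi> = \<pi> (fst v) + \<pi> (snd v)"
  using assms by (cases v) (simp add: lookup_M2_label lookup_tau_exp)

lemma perm_range: "(\<pi>::nat\<Rightarrow>nat) permutes {1..q} \<Longrightarrow> x \<in> {1..q} \<Longrightarrow> \<pi> x \<in> {1..q}"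
  by (simp only: permutes_in_image)

lemma perm_inj:
  assumes "(\<pi>::nat\<Rightarrow>nat) permutes {1..q}" "\<pi> x = \<pi> y"
  shows "x = y"
proof -
  have "inj \<pi>" by (rule permutes_inj[OF assms(1)])
  then show ?thesis using assms(2) by (rule injD)
qed

lemma perm_two:
  fixes p r q :: nat
  assumes "p \<in> {1..q}" "r \<in> {1..q}" "p \<noteq> r"
  shows "\<exists>\<pi>. \<pi> permutes {1..q} \<and> \<pi> p = q \<and> \<pi> r = q - 1"
proof -
  have q2: "q \<ge> 2" using assms by auto
  define r' where "r' = transpose p q r"
  have r'q: "r' \<noteq> q" using assms unfolding r'_def by (auto simp: transpose_def)
  define \<pi> where "\<pi> = transpose r' (q - 1) \<circ> transpose p q"
  have r'in: "r' \<in> {1..q}" using assms q2 unfolding r'_def by (auto simp: transpose_def)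
  have "\<pi> permutes {1..q}" unfolding \<pi>_def
    by (rule permutes_compose; rule permutes_swap_id) (use assms q2 r'in in auto)
  moreover have "\<pi> p = q" unfolding \<pi>_def using r'q q2 by (auto simp: transpose_def)
  moreover have "\<pi> r = q - 1" unfolding \<pi>_def r'_def by (simp add: transpose_def)
  ultimately show ?thesis by blast
qed

lemma two_large:
  fixes x y q :: nat
  assumes "x \<le> q" "y \<le> q" "x \<noteq> y" "2 * q - 1 \<le> x + y"
  shows "(x = q \<and> y = q - 1) \<or> (x = q - 1 \<and> y = q)"
  using assms by arith

lemma sep_vertex:
  assumes tD: "\<tau> \<in> M2_complex q" and vt: "v \<in> \<tau>"
  shows "\<exists>\<pi>. (\<forall>w\<in>\<tau> - {v}. Poly_Mapping.lookup (M2_label q w) \<pi> < Poly_Mapping.lookup (M2_label q v) \<pi>)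
            \<and> 0 < Poly_Mapping.lookup (M2_label q v) \<pi>"
proof -
  obtain c where c: "c \<in> {1..q}" "\<tau> \<subseteq> insert (c, c) (M_set q)" using tD unfolding M2_complex_def by auto
  show ?thesis
  proof (cases "v \<in> M_set q")
    case True
    obtain i j where v: "v = (i, j)" "1 \<le> i" "i < j" "j \<le> q" using True unfolding M_set_def by auto
    define p where "p = (if i = c then j else i)"
    define r where "r = (if i = c then i else j)"
    have pr: "p \<in> {1..q}" "r \<in> {1..q}" "p \<noteq> r" "p \<noteq> c" "{p, r} = {i, j}"
      using v unfolding p_def r_def by auto
    obtain \<pi> where \<pi>: "\<pi> permutes {1..q}" "\<pi> p = q" "\<pi> r = q - 1" using perm_two[OF pr(1-3)] by blast
    have q2: "q \<ge> 2" using v by auto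
    have vval: "Poly_Mapping.lookup (M2_label q v) \<pi> = 2 * q - 1"
    proof -
      have "\<pi> i + \<pi> j = \<pi> p + \<pi> r" using pr(5) pr(3) by (auto simp: doubleton_eq_iff)
      then show ?thesis using lab_perm[OF \<pi>(1)] v \<pi> q2 by simp
    qed
    have "Poly_Mapping.lookup (M2_label q w) \<pi> < 2 * q - 1" if w: "w \<in> \<tau> - {v}" for w
    proof (cases "w = (c, c)")
      case True
      have "\<pi> c \<noteq> q" using perm_inj[OF \<pi>(1), of c p] \<pi>(2) pr(4) by auto
      moreover have "\<pi> c \<in> {1..q}" using perm_range[OF \<pi>(1) c(1)] .
      ultimately have "\<pi> c + \<pi> c < 2 * q - 1" using q2 by auto
      then show ?thesis using lab_perm[OF \<pi>(1)] True by simp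
    next
      case False
      then have "w \<in> M_set q" using w c by auto
      then obtain i' j' where w': "w = (i', j')" "1 \<le> i'" "i' < j'" "j' \<le> q" unfolding M_set_def by auto
      have ri: "\<pi> i' \<le> q" "\<pi> j' \<le> q" using perm_range[OF \<pi>(1), of i'] perm_range[OF \<pi>(1), of j'] w' by auto
      have ne: "\<pi> i' \<noteq> \<pi> j'" using perm_inj[OF \<pi>(1)] w' by fastforce
      show ?thesis
      proof (rule ccontr)
        assume "\<not> ?thesis"
        then have "2 * q - 1 \<le> \<pi> i' + \<pi> j'" using lab_perm[OF \<pi>(1)] w' by simp
        then have "(\<pi> i' = \<pi> p \<and> \<pi> j' = \<pi> r) \<or> (\<pi> i' = \<pi> r \<and> \<pi> j' = \<pi> p)"
          using two_large[OF ri ne] \<pi> by auto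
        then have "(i' = p \<and> j' = r) \<or> (i' = r \<and> j' = p)" using perm_inj[OF \<pi>(1)] by blast
        then have "{i', j'} = {i, j}" using pr(5) by auto
        then have "w = v" using w' v by (auto simp: doubleton_eq_iff)
        then show False using w by simp
      qed
    qed
    moreover have "0 < Poly_Mapping.lookup (M2_label q v) \<pi>" using vval q2 by simp
    ultimately show ?thesis using vval by (intro exI[of _ \<pi>]) auto
  next
    case False
    then have vc: "v = (c, c)" using c vt by auto
    define \<pi> where "\<pi> = transpose c q"
    have \<pi>: "\<pi> permutes {1..q}" "\<pi> c = q" unfolding \<pi>_def using c by (auto intro: permutes_swap_id)
    have vval: "Poly_Mapping.lookup (M2_label q v) \<pi> = 2 * q" using lab_perm[OF \<pi>(1)] vc \<pi> by simp
    have "Poly_Mapping.lookup (M2_label q w) \<pi> < 2 * q" if w: "w \<in> \<tau> - {v}" for w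
    proof -
      have "w \<in> M_set q" using w c vc by auto
      then obtain i' j' where w': "w = (i', j')" "1 \<le> i'" "i' < j'" "j' \<le> q" unfolding M_set_def by auto
      have ri: "\<pi> i' \<le> q" "\<pi> j' \<le> q" using perm_range[OF \<pi>(1), of i'] perm_range[OF \<pi>(1), of j'] w' by auto
      have ne: "\<pi> i' \<noteq> \<pi> j'" using perm_inj[OF \<pi>(1)] w' by fastforce
      show ?thesis using lab_perm[OF \<pi>(1)] w' ri ne by simp
    qed
    moreover have "0 < Poly_Mapping.lookup (M2_label q v) \<pi>" using vval c by simp
    ultimately show ?thesis using vval by (intro exI[of _ \<pi>]) auto
  qed
qed

lemma label_strict:
  assumes tD: "\<tau> \<in> M2_complex q" and s: "\<sigma> \<subseteq> \<tau>" "card \<tau> = Suc (card \<sigma>)"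
  shows "\<not> le_pm (face_label (M2_label q) \<tau> - face_label (M2_label q) \<sigma>) 0"
proof -
  have finT: "finite \<tau>" using tD M2_fin_elem by blast
  have finS: "finite \<sigma>" using finT s finite_subset by blast
  have "\<tau> \<in> {\<tau> \<in> M2_complex q. \<sigma> \<subseteq> \<tau> \<and> card \<tau> = Suc (card \<sigma>)}" using tD s by auto
  then obtain v where v: "\<tau> = insert v \<sigma>" "v \<notin> \<sigma>" unfolding superset_card_Suc[OF finS] by auto
  obtain \<pi> where \<pi>: "\<forall>w\<in>\<tau> - {v}. Poly_Mapping.lookup (M2_label q w) \<pi> < Poly_Mapping.lookup (M2_label q v) \<pi>"
     "0 < Poly_Mapping.lookup (M2_label q v) \<pi>"
    using sep_vertex[OF tD, of v] v by auto
  have "Poly_Mapping.lookup (face_label (M2_label q) \<sigma>) \<pi> < Poly_Mapping.lookup (M2_label q v) \<pi>"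
    unfolding lookup_face_label[OF finS] using \<pi> v finS by (auto simp: Max_less_iff)
  moreover have "le_pm (M2_label q v) (face_label (M2_label q) \<tau>)"
    by (rule lab_le_face_label) (use v finT in auto)
  ultimately have "Poly_Mapping.lookup (face_label (M2_label q) \<sigma>) \<pi> < Poly_Mapping.lookup (face_label (M2_label q) \<tau>) \<pi>"
    unfolding le_pm_def by (meson order_less_le_trans)
  then show ?thesis unfolding le_pm_def by (auto simp: lookup_minus intro!: exI[of _ \<pi>])
qed

lemma minimal_M2:
  fixes f :: "(nat \<times> nat) set \<Rightarrow> (nat \<Rightarrow> nat, 'k::field) mpoly"
  shows "Poly_Mapping.lookup (bps_diff (M2_complex q) (M2_label q) f \<sigma>) 0 = 0"
  unfolding bps_diff_def lookup_sum
proof (rule sum.neutral, rule ballI)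
  fix \<tau> assume \<tau>: "\<tau> \<in> {\<tau> \<in> M2_complex q. \<sigma> \<subseteq> \<tau> \<and> card \<tau> = Suc (card \<sigma>)}"
  have "\<not> le_pm (face_label (M2_label q) \<tau> - face_label (M2_label q) \<sigma>) 0"
    using \<tau> by (intro label_strict) auto
  then show "Poly_Mapping.lookup ((-1) ^ card {w \<in> \<sigma>. w < the_elem (\<tau> - \<sigma>)} *
        mono (face_label (M2_label q) \<tau> - face_label (M2_label q) \<sigma>) * f \<tau>) 0 = 0"
    by (simp only: mult.assoc lookup_neg1_pow lookup_mono_mult if_False mult_zero_right)
qed



definition is_ideal :: "'a::comm_ring_1 set \<Rightarrow> bool" where
  "is_ideal I \<longleftrightarrow> 0 \<in> I \<and> (\<forall>x\<in>I. \<forall>y\<in>I. x + y \<in> I) \<and> (\<forall>r x. x \<in> I \<longrightarrow> r * x \<in> I)"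

lemma ideal_genI:
  assumes "x = (\<Sum>g\<in>F. a g * g)" "finite F" "F \<subseteq> G"
  shows "x \<in> ideal_gen G"
  unfolding ideal_gen_def mem_Collect_eq
  by (rule exI[of _ F], rule exI[of _ a]) (use assms in simp)

lemma ideal_genE:
  assumes "x \<in> ideal_gen G"
  obtains F a where "x = (\<Sum>g\<in>F. a g * g)" "finite F" "F \<subseteq> G"
  using assms unfolding ideal_gen_def mem_Collect_eq by (elim exE conjE) simp

lemma ideal_sum:
  assumes I: "is_ideal I" and t: "\<And>x. x \<in> S \<Longrightarrow> t x \<in> I"
  shows "sum t S \<in> I"
proof (cases "finite S")
  case True
  then show ?thesis using t
  proof (induction S rule: finite_induct)
    case empty
    then show ?case using I unfolding is_ideal_def by simp
  next
    case (insert x F)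
    then have "t x \<in> I" "sum t F \<in> I" by auto
    then have "t x + sum t F \<in> I" using I unfolding is_ideal_def by blast
    then show ?case using insert(1,2) by simp
  qed
next
  case False
  then show ?thesis using I unfolding is_ideal_def by simp
qed

lemma ideal_gen_sub: "G \<subseteq> ideal_gen G"
proof
  fix g assume g: "g \<in> G"
  have "g = (\<Sum>h\<in>{g}. (\<lambda>_. 1) h * h)" by simp
  moreover have "finite {g}" "{g} \<subseteq> G" using g by auto
  ultimately show "g \<in> ideal_gen G" by (rule ideal_genI)
qed

lemma ideal_gen_least:
  assumes "is_ideal I" "G \<subseteq> I"
  shows "ideal_gen G \<subseteq> I"
proof
  fix x assume "x \<in> ideal_gen G"
  then obtain F a where x: "x = (\<Sum>g\<in>F. a g * g)" "finite F" "F \<subseteq> G" by (rule ideal_genE)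
  show "x \<in> I" unfolding x(1)
    by (rule ideal_sum[OF assms(1)]) (use assms x in \<open>auto simp: is_ideal_def\<close>)
qed

lemma ideal_gen_ideal: "is_ideal (ideal_gen G)"
  unfolding is_ideal_def
proof (intro conjI ballI allI impI)
  show "0 \<in> ideal_gen G" by (rule ideal_genI[where F="{}"]) auto
next
  fix x y assume xy: "x \<in> ideal_gen G" "y \<in> ideal_gen G"
  obtain F1 a1 where x: "x = (\<Sum>g\<in>F1. a1 g * g)" "finite F1" "F1 \<subseteq> G" using xy(1) by (rule ideal_genE)
  obtain F2 a2 where y: "y = (\<Sum>g\<in>F2. a2 g * g)" "finite F2" "F2 \<subseteq> G" using xy(2) by (rule ideal_genE)
  define a where "a g = (if g \<in> F1 then a1 g else 0) + (if g \<in> F2 then a2 g else 0)" for g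
  have fin: "finite (F1 \<union> F2)" using x y by simp
  have ag: "a g * g = (if g \<in> F1 then a1 g * g else 0) + (if g \<in> F2 then a2 g * g else 0)" for g
    unfolding a_def by (simp add: distrib_right)
  have "(\<Sum>g\<in>F1 \<union> F2. a g * g) = (\<Sum>g\<in>F1 \<union> F2. (if g \<in> F1 then a1 g * g else 0)) + (\<Sum>g\<in>F1 \<union> F2. (if g \<in> F2 then a2 g * g else 0))"
    unfolding ag by (rule sum.distrib)
  also have "\<dots> = x + y"
  proof -
    have "(F1 \<union> F2) \<inter> F1 = F1" "(F1 \<union> F2) \<inter> F2 = F2" by auto
    then show ?thesis unfolding x y sum.inter_restrict[OF fin, symmetric] by simp
  qed
  finally have "x + y = (\<Sum>g\<in>F1 \<union> F2. a g * g)" by simp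
  then show "x + y \<in> ideal_gen G" by (rule ideal_genI) (use fin x y in auto)
next
  fix r x assume "x \<in> ideal_gen G"
  then obtain F a where x: "x = (\<Sum>g\<in>F. a g * g)" "finite F" "F \<subseteq> G" by (rule ideal_genE)
  have "r * x = (\<Sum>g\<in>F. (r * a g) * g)" unfolding x by (simp add: sum_distrib_left mult.assoc)
  then show "r * x \<in> ideal_gen G" by (rule ideal_genI) (use x in auto)
qed


lemma bps_diff_empty:
  "bps_diff \<Delta> lab f {} = (\<Sum>\<tau> \<in> {\<tau> \<in> \<Delta>. card \<tau> = 1}. mono (face_label lab \<tau>) * f \<tau>)"
  unfolding bps_diff_def face_label_empty by simp

definition D1 :: "nat \<Rightarrow> (nat \<times> nat) set set" where
  "D1 q = {\<tau> \<in> M2_complex q. card \<tau> = 1}"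

definition Img :: "nat \<Rightarrow> (nat \<Rightarrow> nat, 'k::field) mpoly set" where
  "Img q = range (\<lambda>c. \<Sum>\<tau> \<in> D1 q. mono (face_label (M2_label q) \<tau>) * c \<tau>)"

lemma D1_finite: "finite (D1 q)"
  unfolding D1_def using M2_finite by simp

lemma image_eq:
  "{bps_diff (M2_complex q) (M2_label q) f {} | f :: (nat \<times> nat) set \<Rightarrow> (nat \<Rightarrow> nat, 'k::field) mpoly.
      chain_on (M2_complex q) 1 f} = Img q"
proof (intro equalityI subsetI)
  fix x assume "x \<in> {bps_diff (M2_complex q) (M2_label q) f {} | f :: (nat \<times> nat) set \<Rightarrow> (nat \<Rightarrow> nat, 'k::field) mpoly.
      chain_on (M2_complex q) 1 f}"
  then obtain f :: "(nat \<times> nat) set \<Rightarrow> (nat \<Rightarrow> nat, 'k::field) mpoly" where "x = bps_diff (M2_complex q) (M2_label q) f {}" by blast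
  then show "x \<in> Img q" unfolding Img_def bps_diff_empty D1_def by (intro range_eqI[where x=f])
next
  fix x :: "(nat \<Rightarrow> nat, 'k::field) mpoly" assume "x \<in> Img q"
  then obtain c where x: "x = (\<Sum>\<tau> \<in> D1 q. mono (face_label (M2_label q) \<tau>) * c \<tau>)" unfolding Img_def by auto
  define f where "f \<tau> = (if \<tau> \<in> D1 q then c \<tau> else 0)" for \<tau>
  have "chain_on (M2_complex q) 1 f" unfolding chain_on_def f_def D1_def by auto
  moreover have "x = bps_diff (M2_complex q) (M2_label q) f {}"
    unfolding x bps_diff_empty D1_def[symmetric] f_def by (rule sum.cong) auto
  ultimately show "x \<in> {bps_diff (M2_complex q) (M2_label q) f {} | f :: (nat \<times> nat) set \<Rightarrow> (nat \<Rightarrow> nat, 'k::field) mpoly.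
      chain_on (M2_complex q) 1 f}" by blast
qed

lemma Img_ideal: "is_ideal (Img q :: (nat \<Rightarrow> nat, 'k::field) mpoly set)"
  unfolding is_ideal_def
proof (intro conjI ballI allI impI)
  show "0 \<in> Img q" unfolding Img_def by (rule range_eqI[of _ _ "\<lambda>_. 0"]) simp
next
  fix x y :: "(nat \<Rightarrow> nat, 'k::field) mpoly" assume "x \<in> Img q" "y \<in> Img q"
  then obtain c1 c2 where "x = (\<Sum>\<tau> \<in> D1 q. mono (face_label (M2_label q) \<tau>) * c1 \<tau>)"
     "y = (\<Sum>\<tau> \<in> D1 q. mono (face_label (M2_label q) \<tau>) * c2 \<tau>)" unfolding Img_def by auto
  then have "x + y = (\<Sum>\<tau> \<in> D1 q. mono (face_label (M2_label q) \<tau>) * (\<lambda>\<tau>. c1 \<tau> + c2 \<tau>) \<tau>)"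
    by (simp add: sum.distrib distrib_left)
  then show "x + y \<in> Img q" unfolding Img_def by (intro range_eqI[where x="\<lambda>\<tau>. c1 \<tau> + c2 \<tau>"])
next
  fix r x :: "(nat \<Rightarrow> nat, 'k::field) mpoly" assume "x \<in> Img q"
  then obtain c where "x = (\<Sum>\<tau> \<in> D1 q. mono (face_label (M2_label q) \<tau>) * c \<tau>)" unfolding Img_def by auto
  then have "r * x = (\<Sum>\<tau> \<in> D1 q. mono (face_label (M2_label q) \<tau>) * (\<lambda>\<tau>. r * c \<tau>) \<tau>)"
    by (simp add: sum_distrib_left mult.left_commute)
  then show "r * x \<in> Img q" unfolding Img_def by (intro range_eqI[where x="\<lambda>\<tau>. r * c \<tau>"])
qed

lemma Img_gen:
  assumes "\<tau> \<in> D1 q"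
  shows "(mono (face_label (M2_label q) \<tau>) :: (nat \<Rightarrow> nat, 'k::field) mpoly) \<in> Img q"
proof -
  have "(\<Sum>\<sigma> \<in> D1 q. (mono (face_label (M2_label q) \<sigma>) :: (nat \<Rightarrow> nat, 'k::field) mpoly) * (if \<sigma> = \<tau> then 1 else 0))
      = (\<Sum>\<sigma> \<in> D1 q. if \<sigma> = \<tau> then mono (face_label (M2_label q) \<sigma>) else 0)"
    by (rule sum.cong) auto
  also have "\<dots> = mono (face_label (M2_label q) \<tau>)"
    using assms D1_finite by (simp add: sum.delta')
  finally show ?thesis unfolding Img_def
    by (intro range_eqI[where x="\<lambda>\<sigma>. if \<sigma> = \<tau> then 1 else 0"]) simp
qed

lemma mono_add: "(mono (a + b) :: ('x, 'k::comm_ring_1) mpoly) = mono a * mono b"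
  unfolding mono_def by (simp add: mult_single)

lemma tau_mult: "(tau q i * tau q j :: (nat \<Rightarrow> nat, 'k::field) mpoly) = mono (M2_label q (min i j, max i j))"
  unfolding tau_def M2_label_def mono_add[symmetric]
  by (cases "i \<le> j") (auto simp: min_def max_def add.commute)

lemma single_D1:
  assumes "i \<in> {1..q}" "j \<in> {1..q}"
  shows "{(min i j, max i j)} \<in> D1 q"
proof -
  have "(min i j, max i j) \<in> insert (i, i) (M_set q)"
    using assms unfolding M_set_def by (cases "i < j"; cases "j < i") (auto simp: min_def max_def)
  then have "{(min i j, max i j)} \<in> M2_complex q" unfolding M2_complex_def using assms by blast
  then show ?thesis unfolding D1_def by simp
qed

lemma tau_prod_Img:
  assumes "i \<in> {1..q}" "j \<in> {1..q}"
  shows "(tau q i * tau q j :: (nat \<Rightarrow> nat, 'k::field) mpoly) \<in> Img q"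
  using Img_gen[OF single_D1[OF assms]] unfolding tau_mult face_label_single .

lemma D1_elem:
  assumes "\<tau> \<in> D1 q"
  obtains i j where "i \<in> {1..q}" "j \<in> {1..q}" "\<tau> = {(i, j)}"
proof -
  have "card \<tau> = 1" "\<tau> \<in> M2_complex q" using assms unfolding D1_def by auto
  then obtain v where v: "\<tau> = {v}" using card_1_singletonE by blast
  then have "v \<in> {1..q} \<times> {1..q}" using M2_sub[OF \<open>\<tau> \<in> M2_complex q\<close>] by auto
  then show ?thesis using v that by (cases v) auto
qed

lemma Img_eq_prod:
  "(Img q :: (nat \<Rightarrow> nat, 'k::field) mpoly set) = ideal_prod (perm_ideal q) (perm_ideal q)"
proof (intro equalityI)
  let ?T = "perm_ideal q :: (nat \<Rightarrow> nat, 'k::field) mpoly set"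
  have PI: "is_ideal (ideal_prod ?T ?T)" unfolding ideal_prod_def by (rule ideal_gen_ideal)
  have tT: "tau q i \<in> ?T" if "i \<in> {1..q}" for i
    using ideal_gen_sub[of "tau q ` {1..q}"] that unfolding perm_ideal_def by blast
  show "Img q \<subseteq> ideal_prod ?T ?T"
  proof
    fix x :: "(nat \<Rightarrow> nat, 'k::field) mpoly" assume "x \<in> Img q"
    then obtain c where x: "x = (\<Sum>\<tau> \<in> D1 q. mono (face_label (M2_label q) \<tau>) * c \<tau>)" unfolding Img_def by auto
    show "x \<in> ideal_prod ?T ?T" unfolding x
    proof (rule ideal_sum[OF PI])
      fix \<tau> assume "\<tau> \<in> D1 q"
      then obtain i j where ij: "i \<in> {1..q}" "j \<in> {1..q}" "\<tau> = {(i, j)}" by (rule D1_elem)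
      have "(mono (face_label (M2_label q) \<tau>) :: (nat \<Rightarrow> nat, 'k::field) mpoly) = tau q i * tau q j"
        unfolding ij face_label_single tau_def M2_label_def mono_add by simp
      also have "\<dots> \<in> ideal_prod ?T ?T"
        using ideal_gen_sub[of "{a * b | a b. a \<in> ?T \<and> b \<in> ?T}"] tT[OF ij(1)] tT[OF ij(2)]
        unfolding ideal_prod_def by blast
      finally have "mono (face_label (M2_label q) \<tau>) \<in> ideal_prod ?T ?T" .
      then show "mono (face_label (M2_label q) \<tau>) * c \<tau> \<in> ideal_prod ?T ?T"
        using PI unfolding is_ideal_def by (metis mult.commute)
    qed
  qed
  have II: "is_ideal (Img q :: (nat \<Rightarrow> nat, 'k::field) mpoly set)" by (rule Img_ideal)
  have J1: "is_ideal {b. \<forall>i\<in>{1..q}. tau q i * b \<in> (Img q :: (nat \<Rightarrow> nat, 'k::field) mpoly set)}"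
    using II unfolding is_ideal_def by (auto simp: distrib_left mult.left_commute)
  have TJ1: "?T \<subseteq> {b. \<forall>i\<in>{1..q}. tau q i * b \<in> Img q}"
    unfolding perm_ideal_def by (rule ideal_gen_least[OF J1]) (auto intro: tau_prod_Img)
  have J2: "is_ideal {a. \<forall>b\<in>?T. a * b \<in> (Img q :: (nat \<Rightarrow> nat, 'k::field) mpoly set)}"
    using II unfolding is_ideal_def by (auto simp: distrib_right mult.assoc)
  have gens: "tau q ` {1..q} \<subseteq> {a. \<forall>b\<in>?T. a * b \<in> Img q}" using TJ1 by auto
  have eqT: "?T = ideal_gen (tau q ` {1..q})" unfolding perm_ideal_def ..
  have TJ2: "?T \<subseteq> {a. \<forall>b\<in>?T. a * b \<in> Img q}"
    by (subst (1) eqT) (rule ideal_gen_least[OF J2 gens])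
  show "ideal_prod ?T ?T \<subseteq> Img q"
    unfolding ideal_prod_def by (rule ideal_gen_least[OF II]) (use TJ2 in blast)
qed

theorem corollary4p9:
  fixes q :: nat
  assumes "q \<ge> 1"
  shows "supports_minimal_free_resolution (M2_complex q) (M2_label q)
           (ideal_prod (perm_ideal q) (perm_ideal q) :: (nat \<Rightarrow> nat, 'k::field) mpoly set)"
  unfolding supports_minimal_free_resolution_def supports_free_resolution_def
proof (intro conjI allI impI)
  fix k and f :: "(nat \<times> nat) set \<Rightarrow> (nat \<Rightarrow> nat, 'k) mpoly"
  assume "1 \<le> k" "chain_on (M2_complex q) k f \<and> bps_diff (M2_complex q) (M2_label q) f = (\<lambda>_. 0)"
  then show "\<exists>g. chain_on (M2_complex q) (Suc k) g \<and> bps_diff (M2_complex q) (M2_label q) g = f"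
    using exact_M2 by blast
next
  show "{bps_diff (M2_complex q) (M2_label q) f {} | f :: (nat \<times> nat) set \<Rightarrow> (nat \<Rightarrow> nat, 'k) mpoly.
      chain_on (M2_complex q) 1 f} = ideal_prod (perm_ideal q) (perm_ideal q)"
    unfolding image_eq Img_eq_prod ..
next
  fix k \<sigma> and f :: "(nat \<times> nat) set \<Rightarrow> (nat \<Rightarrow> nat, 'k) mpoly"
  show "Poly_Mapping.lookup (bps_diff (M2_complex q) (M2_label q) f \<sigma>) 0 = 0" by (rule minimal_M2)
qed

end
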